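(* Let $\mathcal{B}$ be a $\sigma$-algebra on a nonempty set $E$, let $\nu$ be an optimal measure on $\mathcal{B}$, and let $(H_n)_{n\in N}$ be an at most countable collection of pairwise disjoint $\nu$-atoms $H_n\in\mathcal{B}$ such that for every $B\in\mathcal{B}$ the supremum $\sup_{n\in N}\nu(B\cap H_n)$ is attained and equals $\nu(B)$. Then $|\nu|=\sum_{n\in N}\nu(H_n)$. In particular, $\nu$ is of bounded variation if and only if $\sum_{n\in N}\nu(H_n)<\infty$.
   Context: An optimal measure is a map $\nu:\mathcal{B}\to[0,\infty]$ with $\nu(\emptyset)=0$, $\nu(B\cup B')=\max(\nu(B),\nu(B'))$, continuous from below ($\nu(\bigcup_nB_n)=\lim_n\nu(B_n)$ for nondecreasing sequences) and from above ($\nu(\bigcap_nB_n)=\lim_n\nu(B_n)$ for nonincreasing sequences). A $\nu$-atom is $H\in\mathcal{B}$ with $\nu(H)>0$ such that for each $B\in\mathcal{B}$ either $\nu(H\setminus B)=0$ or $\nu(H\cap B)=0$. (For every optimal measure such a collection $(H_n)$ exists.) $|\nu|=\sup_\pi\sum_{B\in\pi}\nu(B)$, the supremum over finite partitions $\pi$ of $E$ into elements of $\mathcal{B}$; $\nu$ is of bounded variation if $|\nu|<\infty$. *)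

theory Defs
  imports "HOL-Analysis.Analysis"
begin

definition optimal_measure :: "'a set set \<Rightarrow> ('a set \<Rightarrow> ennreal) \<Rightarrow> bool" where
  "optimal_measure Bs \<nu> \<longleftrightarrow>
     \<nu> {} = 0 \<and>
     (\<forall>B\<in>Bs. \<forall>B'\<in>Bs. \<nu> (B \<union> B') = max (\<nu> B) (\<nu> B')) \<and>
     (\<forall>A. range A \<subseteq> Bs \<longrightarrow> incseq A \<longrightarrow> (\<lambda>n. \<nu> (A n)) \<longlonglongrightarrow> \<nu> (\<Union>n. A n)) \<and>
     (\<forall>A. range A \<subseteq> Bs \<longrightarrow> decseq A \<longrightarrow> (\<lambda>n. \<nu> (A n)) \<longlonglongrightarrow> \<nu> (\<Inter>n. A n))"

definition nu_atom :: "'a set set \<Rightarrow> ('a set \<Rightarrow> ennreal) \<Rightarrow> 'a set \<Rightarrow> bool" where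
  "nu_atom Bs \<nu> H \<longleftrightarrow> H \<in> Bs \<and> \<nu> H > 0 \<and>
     (\<forall>B\<in>Bs. \<nu> (H - B) = 0 \<or> \<nu> (H \<inter> B) = 0)"

definition variation :: "'a set \<Rightarrow> 'a set set \<Rightarrow> ('a set \<Rightarrow> ennreal) \<Rightarrow> ennreal" where
  "variation E Bs \<nu> =
     (SUP \<pi> \<in> {\<pi>. finite \<pi> \<and> \<pi> \<subseteq> Bs \<and> disjoint \<pi> \<and> \<Union>\<pi> = E}. \<Sum>B\<in>\<pi>. \<nu> B)"

definition bounded_variation :: "'a set \<Rightarrow> 'a set set \<Rightarrow> ('a set \<Rightarrow> ennreal) \<Rightarrow> bool" where
  "bounded_variation E Bs \<nu> \<longleftrightarrow> variation E Bs \<nu> < \<infinity>"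

end

theory Submission
  imports Defs
begin

theorem proposition6p7:
  fixes E :: "'a set" and Bs :: "'a set set" and \<nu> :: "'a set \<Rightarrow> ennreal"
    and N :: "'i set" and H :: "'i \<Rightarrow> 'a set"
  assumes "E \<noteq> {}"
    and "sigma_algebra E Bs"
    and "optimal_measure Bs \<nu>"
    and "countable N"
    and "disjoint_family_on H N"
    and "\<forall>n\<in>N. nu_atom Bs \<nu> (H n)"
    and "\<forall>B\<in>Bs. (\<exists>n\<in>N. \<nu> (B \<inter> H n) = (SUP m\<in>N. \<nu> (B \<inter> H m)))
                 \<and> (SUP m\<in>N. \<nu> (B \<inter> H m)) = \<nu> B"
  shows "variation E Bs \<nu> = (\<Sum>\<^sub>\<infinity>n\<in>N. \<nu> (H n))
     \<and> (bounded_variation E Bs \<nu> \<longleftrightarrow> (\<Sum>\<^sub>\<infinity>n\<in>N. \<nu> (H n)) < \<infinity>)"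
proof -
  interpret sigma_algebra E Bs by fact
  have nu0: "\<nu> {} = 0" and umax: "\<And>B B'. B \<in> Bs \<Longrightarrow> B' \<in> Bs \<Longrightarrow> \<nu> (B \<union> B') = max (\<nu> B) (\<nu> B')"
    using assms(3) unfolding optimal_measure_def by auto
  have atom: "\<And>n. n \<in> N \<Longrightarrow> H n \<in> Bs \<and> \<nu> (H n) > 0 \<and> (\<forall>B\<in>Bs. \<nu> (H n - B) = 0 \<or> \<nu> (H n \<inter> B) = 0)"
    using assms(6) unfolding nu_atom_def by auto
  have IS: "(\<Sum>\<^sub>\<infinity>n\<in>N. \<nu> (H n)) = (SUP F\<in>{F. finite F \<and> F\<subseteq>N}. sum (\<lambda>n. \<nu> (H n)) F)"
    by (rule nonneg_infsum_complete) auto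
  have key: "\<exists>n\<in>N. \<nu> B = \<nu> (H n) \<and> \<nu> (H n - B) = 0" if B: "B \<in> Bs" "\<nu> B > 0" for B
  proof -
    from assms(7) B obtain n where n: "n \<in> N" "\<nu> (B \<inter> H n) = \<nu> B" by metis
    have Hn: "H n \<in> Bs" using atom n by auto
    have "\<nu> (H n \<inter> B) > 0" using n B by (simp add: Int_commute)
    hence z: "\<nu> (H n - B) = 0" using atom[OF n(1)] B by auto
    have "H n = (H n \<inter> B) \<union> (H n - B)" by auto
    hence "\<nu> (H n) = max (\<nu> (H n \<inter> B)) (\<nu> (H n - B))"
      using umax[of "H n \<inter> B" "H n - B"] Hn B by auto
    hence "\<nu> (H n) = \<nu> B" using z n by (simp add: Int_commute)
    thus ?thesis using n z by (intro bexI[of _ n]) auto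
  qed
  have le1: "variation E Bs \<nu> \<le> (\<Sum>\<^sub>\<infinity>n\<in>N. \<nu> (H n))"
    unfolding variation_def
  proof (rule SUP_least)
    fix \<pi> assume "\<pi> \<in> {\<pi>. finite \<pi> \<and> \<pi> \<subseteq> Bs \<and> disjoint \<pi> \<and> \<Union>\<pi> = E}"
    hence \<pi>: "finite \<pi>" "\<pi> \<subseteq> Bs" "disjoint \<pi>" by auto
    define P where "P = {B\<in>\<pi>. \<nu> B > 0}"
    define g where "g B = (SOME n. n \<in> N \<and> \<nu> B = \<nu> (H n) \<and> \<nu> (H n - B) = 0)" for B
    have g: "g B \<in> N \<and> \<nu> B = \<nu> (H (g B)) \<and> \<nu> (H (g B) - B) = 0" if "B \<in> P" for B
    proof -
      have "B \<in> Bs" "\<nu> B > 0" using that \<pi>(2) unfolding P_def by auto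
      from key[OF this] have "\<exists>n. n \<in> N \<and> \<nu> B = \<nu> (H n) \<and> \<nu> (H n - B) = 0" by blast
      from someI_ex[OF this] show ?thesis unfolding g_def .
    qed
    have inj: "inj_on g P"
    proof (rule inj_onI)
      fix B B' assume BB: "B \<in> P" "B' \<in> P" "g B = g B'"
      show "B = B'"
      proof (rule ccontr)
        assume ne: "B \<noteq> B'"
        have "B \<inter> B' = {}" using \<pi>(3) BB ne unfolding P_def disjoint_def by auto
        let ?n = "g B"
        have n: "?n \<in> N" using g BB by auto
        have B'in: "B' \<in> Bs" "B \<in> Bs" using BB \<pi>(2) unfolding P_def by auto
        have pos: "\<nu> (H ?n \<inter> B') > 0"
        proof -
          have "H ?n = (H ?n \<inter> B') \<union> (H ?n - B')" by auto
          hence "\<nu> (H ?n) = max (\<nu> (H ?n \<inter> B')) (\<nu> (H ?n - B'))"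
            using umax[of "H ?n \<inter> B'" "H ?n - B'"] atom[OF n] B'in by auto
          moreover have "\<nu> (H ?n - B') = 0" using g[OF BB(2)] BB(3) by simp
          ultimately have "\<nu> (H ?n) = \<nu> (H ?n \<inter> B')" by simp
          thus ?thesis using atom[OF n] by simp
        qed
        have "H ?n \<inter> B' \<subseteq> H ?n - B" using \<open>B \<inter> B' = {}\<close> by auto
        hence "H ?n - B = (H ?n \<inter> B') \<union> (H ?n - B)" by auto
        hence "\<nu> (H ?n - B) = max (\<nu> (H ?n \<inter> B')) (\<nu> (H ?n - B))"
          using umax[of "H ?n \<inter> B'" "H ?n - B"] atom[OF n] B'in by auto
        hence "\<nu> (H ?n - B) \<ge> \<nu> (H ?n \<inter> B')" by (metis max.cobounded1)
        thus False using g[OF BB(1)] pos by simp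
      qed
    qed
    have "(\<Sum>B\<in>\<pi>. \<nu> B) = (\<Sum>B\<in>P. \<nu> B)"
      unfolding P_def using \<pi>(1) by (intro sum.mono_neutral_right) (auto simp: not_gr_zero)
    also have "\<dots> = (\<Sum>B\<in>P. \<nu> (H (g B)))" using g by (intro sum.cong) auto
    also have "\<dots> = (\<Sum>n\<in>g ` P. \<nu> (H n))" using sum.reindex[OF inj, of "\<lambda>n. \<nu> (H n)"] by simp
    also have "\<dots> \<le> (SUP F\<in>{F. finite F \<and> F\<subseteq>N}. sum (\<lambda>n. \<nu> (H n)) F)"
      using g \<pi>(1) unfolding P_def by (intro SUP_upper) auto
    finally show "(\<Sum>B\<in>\<pi>. \<nu> B) \<le> (\<Sum>\<^sub>\<infinity>n\<in>N. \<nu> (H n))" using IS by simp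
  qed
  have le2: "(\<Sum>\<^sub>\<infinity>n\<in>N. \<nu> (H n)) \<le> variation E Bs \<nu>"
    unfolding IS
  proof (rule SUP_least)
    fix F assume "F \<in> {F. finite F \<and> F\<subseteq>N}"
    hence F: "finite F" "F \<subseteq> N" by auto
    define R where "R = E - (\<Union>n\<in>F. H n)"
    define \<pi> where "\<pi> = insert R (H ` F)"
    have HB: "\<And>n. n \<in> F \<Longrightarrow> H n \<in> Bs" using atom F by auto
    have Hne: "\<And>n. n \<in> F \<Longrightarrow> H n \<noteq> {}" using atom F nu0 by fastforce
    have injH: "inj_on H F"
    proof (rule inj_onI)
      fix m n assume "m \<in> F" "n \<in> F" "H m = H n"
      thus "m = n" using assms(5) F Hne unfolding disjoint_family_on_def by blast
    qed
    have UB: "(\<Union>n\<in>F. H n) \<in> Bs" using HB F by (intro finite_UN) auto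
    have RB: "R \<in> Bs" unfolding R_def using UB top by (rule Diff[rotated])
    have "\<pi> \<in> {\<pi>. finite \<pi> \<and> \<pi> \<subseteq> Bs \<and> disjoint \<pi> \<and> \<Union>\<pi> = E}"
    proof -
      have "disjoint \<pi>"
      proof (rule disjointI)
        fix A B assume AB: "A \<in> \<pi>" "B \<in> \<pi>" "A \<noteq> B"
        show "A \<inter> B = {}"
        proof (cases "A = R")
          case True
          then obtain m where "m \<in> F" "B = H m" using AB unfolding \<pi>_def by auto
          thus ?thesis using True unfolding R_def by auto
        next
          case False
          then obtain m where m: "m \<in> F" "A = H m" using AB unfolding \<pi>_def by auto
          show ?thesis
          proof (cases "B = R")
            case True thus ?thesis using m unfolding R_def by auto
          next
            case False
            then obtain k where k: "k \<in> F" "B = H k" using AB unfolding \<pi>_def by auto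
            hence "m \<noteq> k" using m AB by auto
            thus ?thesis using assms(5) F m k unfolding disjoint_family_on_def by auto
          qed
        qed
      qed
      moreover have "\<Union>\<pi> = E"
      proof -
        have "(\<Union>n\<in>F. H n) \<subseteq> E" using UB sets_into_space by auto
        thus ?thesis unfolding \<pi>_def R_def by auto
      qed
      ultimately show ?thesis using F RB HB unfolding \<pi>_def by auto
    qed
    hence "(\<Sum>B\<in>\<pi>. \<nu> B) \<le> variation E Bs \<nu>" unfolding variation_def by (rule SUP_upper)
    moreover have "(\<Sum>n\<in>F. \<nu> (H n)) = (\<Sum>B\<in>H ` F. \<nu> B)" using sum.reindex[OF injH, of \<nu>] by simp
    moreover have "(\<Sum>B\<in>H ` F. \<nu> B) \<le> (\<Sum>B\<in>\<pi>. \<nu> B)"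
      unfolding \<pi>_def using F by (intro sum_mono2) auto
    ultimately show "(\<Sum>n\<in>F. \<nu> (H n)) \<le> variation E Bs \<nu>" by simp
  qed
  have eq: "variation E Bs \<nu> = (\<Sum>\<^sub>\<infinity>n\<in>N. \<nu> (H n))" using le1 le2 by simp
  thus ?thesis unfolding bounded_variation_def by simp
qed

end
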